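(* In the binary random graph affiliation mixture model with $Q=2$ groups, if $\alpha\ne\beta$ then the parameters $\alpha,\beta$ and $\{\pi_1,\pi_2=1-\pi_1\}$ (the latter up to label swapping) are strictly identifiable from the joint distribution of $K_3$; that is, any two parameter values $(\pi_1,\alpha,\beta)$, $(\pi_1',\alpha',\beta')$ with $\alpha\neq\beta$, $\alpha'\ne\beta'$ inducing the same law of $K_3$ satisfy $\alpha=\alpha'$, $\beta=\beta'$, and $\pi_1'\in\{\pi_1,1-\pi_1\}$.
   Context: Random graph mixture model: nodes have i.i.d. latent groups $Z_i\in\{1,\dots,Q\}$ with $\pi_q=\mathbb P(Z_i=q)\in(0,1)$, $\sum_q\pi_q=1$; edge variables $X_{ij}$ ($i<j$) are conditionally independent given all $Z$'s, with law of $X_{ij}$ depending only on $(Z_i,Z_j)$. Binary affiliation model: $X_{ij}\in\{0,1\}$ with $\mathbb P(X_{ij}=1\mid Z_i=q,Z_j=l)=\alpha$ if $q=l$ and $=\beta$ if $q\ne l$. $K_n$ denotes the collection of the $\binom n2$ edge variables among a set of $n$ nodes. *)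

theory Defs
  imports Complex_Main
begin

text \<open>Binary affiliation model with Q = 2 groups. A latent group is encoded as a bool
  (True = group 1, False = group 2); pi1 = P(Z_i = group 1), pi2 = 1 - pi1.\<close>

definition grp_prob :: "real \<Rightarrow> bool \<Rightarrow> real" where
  "grp_prob pi1 g = (if g then pi1 else 1 - pi1)"

definition conn_prob :: "real \<Rightarrow> real \<Rightarrow> bool \<Rightarrow> bool \<Rightarrow> real" where
  "conn_prob \<alpha> \<beta> g h = (if g = h then \<alpha> else \<beta>)"

definition edge_lik :: "real \<Rightarrow> bool \<Rightarrow> real" where
  "edge_lik p x = (if x then p else 1 - p)"

definition K3_law :: "real \<Rightarrow> real \<Rightarrow> real \<Rightarrow> bool \<Rightarrow> bool \<Rightarrow> bool \<Rightarrow> real" where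
  "K3_law pi1 \<alpha> \<beta> x12 x13 x23 =
     (\<Sum>z1\<in>(UNIV::bool set). \<Sum>z2\<in>(UNIV::bool set). \<Sum>z3\<in>(UNIV::bool set).
        grp_prob pi1 z1 * grp_prob pi1 z2 * grp_prob pi1 z3
        * edge_lik (conn_prob \<alpha> \<beta> z1 z2) x12
        * edge_lik (conn_prob \<alpha> \<beta> z1 z3) x13
        * edge_lik (conn_prob \<alpha> \<beta> z2 z3) x23)"

end

theory Submission
  imports Defs
begin
lemma ineq: fixes k k' :: real assumes "0 < k'" "k' < k" "k < 1"
  shows "(1-k)*(1+2*k)^2*k'^3 < (1-k')*(1+2*k')^2*k^3"
proof -
  have a: "(1+2*k)*k' < (1+2*k')*k" using assms by (simp add: algebra_simps)
  have b: "((1+2*k)*k')^2 < ((1+2*k')*k)^2" using a assms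
    by (intro power_strict_mono) auto
  have c: "((1+2*k)*k')^2 * k' < ((1+2*k')*k)^2 * k" using b assms
    by (intro mult_strict_mono) auto
  have d: "(1-k)*(((1+2*k)*k')^2 * k') < (1-k')*(((1+2*k')*k)^2 * k)"
  proof (rule mult_strict_mono)
    show "1 - k < 1 - k'" using assms by simp
    show "((1+2*k)*k')^2 * k' < ((1+2*k')*k)^2 * k" by (rule c)
    show "0 < 1 - k'" using assms by simp
    show "0 \<le> ((1+2*k)*k')^2 * k'" using assms by simp
  qed
  show ?thesis using d by (simp add: algebra_simps power2_eq_square power3_eq_cube)
qed

lemma cube_inj: fixes x y :: real assumes "x^3 = y^3" shows "x = y"
  using assms by (metis odd_real_root_power_cancel odd_numeral) 

lemma ineq2: fixes c c' :: real assumes "0 < c" "c < c'" "c' < 1/4"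
  shows "c*(3-8*c)^2*(1-4*c')^3 < c'*(3-8*c')^2*(1-4*c)^3"
proof -
  have h: "(1-(1-4*c))*(1+2*(1-4*c))^2*(1-4*c')^3 < (1-(1-4*c'))*(1+2*(1-4*c'))^2*(1-4*c)^3"
    using assms by (intro ineq) auto
  have e1: "1-(1-4*c) = 4*c" "1+2*(1-4*c) = 3-8*c" "1-(1-4*c') = 4*c'" "1+2*(1-4*c') = 3-8*c'" by simp_all
  have "4*(c*(3-8*c)^2*(1-4*c')^3) < 4*(c'*(3-8*c')^2*(1-4*c)^3)"
    using h unfolding e1 by (simp only: mult.assoc)
  then show ?thesis by simp
qed

lemma core: fixes c c' u u' :: real
  assumes c: "0 < c" "c \<le> 1/4" and c': "0 < c'" "c' \<le> 1/4" and u: "u \<noteq> 0" "u' \<noteq> 0"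
   and V: "c*(1-4*c)*u^2 = c'*(1-4*c')*u'^2"
   and W: "2*c^2*(3-8*c)*u^3 = 2*c'^2*(3-8*c')*u'^3"
  shows "c = c' \<and> u = u'"
proof -
  have cc: "c = c'"
  proof (cases "c = 1/4")
    case True
    have "c*(1-4*c) = 0" using True by simp
    then have "c'*(1-4*c')*u'^2 = 0" using V by (metis mult_zero_left)
    then have "1-4*c' = 0" using c' u by simp
    then show ?thesis using True by simp
  next
    case False
    have "c' \<noteq> 1/4"
    proof
      assume "c' = 1/4"
      then have "c*(1-4*c)*u^2 = 0" using V by simp
      then show False using False c u by auto
    qed
    then have lt: "c < 1/4" "c' < 1/4" using False c c' by auto
    define Vv where "Vv = c*(1-4*c)*u^2"
    define Ww where "Ww = 2*c^2*(3-8*c)*u^3"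
    have Vpos: "Vv > 0" unfolding Vv_def using lt c u by (intro mult_pos_pos) auto
    have e1: "Ww^2*(1-4*c)^3 = 4*c*(3-8*c)^2 * Vv^3" unfolding Vv_def Ww_def
      by (simp add: power_mult_distrib eval_nat_numeral)
    have Vv': "Vv = c'*(1-4*c')*u'^2" using V Vv_def by simp
    have Ww': "Ww = 2*c'^2*(3-8*c')*u'^3" using W Ww_def by simp
    have e2: "Ww^2*(1-4*c')^3 = 4*c'*(3-8*c')^2 * Vv^3" unfolding Vv' Ww'
      by (simp add: power_mult_distrib eval_nat_numeral)
    have "(4*c*(3-8*c)^2*(1-4*c')^3) * Vv^3 = (Ww^2*(1-4*c)^3)*(1-4*c')^3" using e1 by simp
    also have "\<dots> = (Ww^2*(1-4*c')^3)*(1-4*c)^3" by simp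
    also have "\<dots> = (4*c'*(3-8*c')^2*(1-4*c)^3) * Vv^3" using e2 by simp
    finally have "(4*c*(3-8*c)^2*(1-4*c')^3) * Vv^3 = (4*c'*(3-8*c')^2*(1-4*c)^3) * Vv^3" .
    then have eq: "c*(3-8*c)^2*(1-4*c')^3 = c'*(3-8*c')^2*(1-4*c)^3"
      using Vpos by simp
    show ?thesis
    proof (rule ccontr)
      assume ne: "c \<noteq> c'"
      show False
      proof (cases "c < c'")
        case True
        show False using ineq2[OF c(1) True lt(2)] eq by simp
      next
        case False
        then have "c' < c" using ne by simp
        show False using ineq2[OF c'(1) \<open>c' < c\<close> lt(1)] eq by simp
      qed
    qed
  qed
  have "2*c^2*(3-8*c) \<noteq> 0" using c by auto
  then have "u^3 = u'^3" using W cc by simp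
  then show ?thesis using cc cube_inj by blast
qed

lemma L3': "K3_law p a b True True True = (1-3*(p*(1-p)))*(b+(a-b))^3 + 3*(p*(1-p))*(b+(a-b))*b^2"
  by (simp add: K3_law_def grp_prob_def conn_prob_def edge_lik_def UNIV_bool) algebra
lemma L2': "K3_law p a b True True False + K3_law p a b True True True = b^2 + 2*b*(a-b)*(1-2*(p*(1-p))) + (a-b)^2*(1-3*(p*(1-p)))"
  by (simp add: K3_law_def grp_prob_def conn_prob_def edge_lik_def UNIV_bool) algebra
lemma L1': "K3_law p a b True False False + 2*K3_law p a b True True False + K3_law p a b True True True = b + (a-b)*(1-2*(p*(1-p)))"
  by (simp add: K3_law_def grp_prob_def conn_prob_def edge_lik_def UNIV_bool) algebra

lemma VW: fixes b u c b' u' c' :: real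
  assumes h1: "b + u*(1-2*c) = b' + u'*(1-2*c')"
   and h2: "b^2 + 2*b*u*(1-2*c) + u^2*(1-3*c) = b'^2 + 2*b'*u'*(1-2*c') + u'^2*(1-3*c')"
   and h3: "(1-3*c)*(b+u)^3 + 3*c*(b+u)*b^2 = (1-3*c')*(b'+u')^3 + 3*c'*(b'+u')*b'^2"
  shows "c*(1-4*c)*u^2 = c'*(1-4*c')*u'^2 \<and> 2*c^2*(3-8*c)*u^3 = 2*c'^2*(3-8*c')*u'^3"
proof -
  have v: "c*(1-4*c)*u^2 = (b^2 + 2*b*u*(1-2*c) + u^2*(1-3*c)) - (b + u*(1-2*c))^2"
    "c'*(1-4*c')*u'^2 = (b'^2 + 2*b'*u'*(1-2*c') + u'^2*(1-3*c')) - (b' + u'*(1-2*c'))^2"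
    by algebra+
  have w: "2*c^2*(3-8*c)*u^3 = ((1-3*c)*(b+u)^3 + 3*c*(b+u)*b^2) - (b + u*(1-2*c))^3
     - 3*(b + u*(1-2*c))*((b^2 + 2*b*u*(1-2*c) + u^2*(1-3*c)) - (b + u*(1-2*c))^2)"
    "2*c'^2*(3-8*c')*u'^3 = ((1-3*c')*(b'+u')^3 + 3*c'*(b'+u')*b'^2) - (b' + u'*(1-2*c'))^3
     - 3*(b' + u'*(1-2*c'))*((b'^2 + 2*b'*u'*(1-2*c') + u'^2*(1-3*c')) - (b' + u'*(1-2*c'))^2)"
    by algebra+
  show ?thesis unfolding v w h1 h2 h3 by simp
qed

theorem corollary1:
  fixes pi1 \<alpha> \<beta> pi1' \<alpha>' \<beta>' :: real
  assumes "0 < pi1" "pi1 < 1" "0 \<le> \<alpha>" "\<alpha> \<le> 1" "0 \<le> \<beta>" "\<beta> \<le> 1" "\<alpha> \<noteq> \<beta>"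
    and "0 < pi1'" "pi1' < 1" "0 \<le> \<alpha>'" "\<alpha>' \<le> 1" "0 \<le> \<beta>'" "\<beta>' \<le> 1" "\<alpha>' \<noteq> \<beta>'"
    and "K3_law pi1 \<alpha> \<beta> = K3_law pi1' \<alpha>' \<beta>'"
  shows "\<alpha> = \<alpha>' \<and> \<beta> = \<beta>' \<and> (pi1' = pi1 \<or> pi1' = 1 - pi1)"
proof -
  note E = assms(15)
  define c where "c = pi1*(1-pi1)"
  define c' where "c' = pi1'*(1-pi1')"
  define u where "u = \<alpha> - \<beta>"
  define u' where "u' = \<alpha>' - \<beta>'"
  have sq: "0 \<le> (pi1-1/2)^2" "0 \<le> (pi1'-1/2)^2" by simp_all
  have cpos: "0 < c" "c \<le> 1/4" unfolding c_def using assms(1,2) sq(1)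
    by (simp_all add: power2_eq_square algebra_simps)
  have cpos': "0 < c'" "c' \<le> 1/4" unfolding c'_def using assms(8,9) sq(2)
    by (simp_all add: power2_eq_square algebra_simps)
  have u0: "u \<noteq> 0" "u' \<noteq> 0" unfolding u_def u'_def using assms(7,14) by auto
  have h1: "\<beta> + u*(1-2*c) = \<beta>' + u'*(1-2*c')"
    unfolding u_def u'_def c_def c'_def by (metis L1' E)
  have h2: "\<beta>^2 + 2*\<beta>*u*(1-2*c) + u^2*(1-3*c) = \<beta>'^2 + 2*\<beta>'*u'*(1-2*c') + u'^2*(1-3*c')"
    unfolding u_def u'_def c_def c'_def by (metis L2' E)
  have h3: "(1-3*c)*(\<beta>+u)^3 + 3*c*(\<beta>+u)*\<beta>^2 = (1-3*c')*(\<beta>'+u')^3 + 3*c'*(\<beta>'+u')*\<beta>'^2"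
    unfolding u_def u'_def c_def c'_def by (metis L3' E)
  from VW[OF h1 h2 h3] have "c*(1-4*c)*u^2 = c'*(1-4*c')*u'^2" "2*c^2*(3-8*c)*u^3 = 2*c'^2*(3-8*c')*u'^3"
    by blast+
  from core[OF cpos cpos' u0 this] have cu: "c = c'" "u = u'" by auto
  have bb: "\<beta> = \<beta>'" using h1 cu by simp
  have aa: "\<alpha> = \<alpha>'" using cu(2) bb unfolding u_def u'_def by simp
  have "(pi1' - pi1)*(pi1' - (1 - pi1)) = 0" using cu(1) unfolding c_def c'_def by algebra
  then show ?thesis using aa bb by (simp add: right_minus_eq)
qed
end
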